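(* Let $n,x$ be integers with $1<x<n$, so that $G=C_{2n}(x,1,n)$ is a $5$-regular circulant graph. If $n\equiv 0\pmod 3$, $x\equiv 1\pmod 3$ and $1<x\leq \tfrac{2n}{3}$, then $G$ is word-representable.
   Context: Two distinct letters $x,y$ alternate in a word $w$ if, after deleting all other letters from $w$, the resulting word is of the form $xyxy\cdots$ or $yxyx\cdots$ (of even or odd length). A graph $G=(V,E)$ is word-representable if there is a word $w$ over the alphabet $V$, containing every letter of $V$ at least once, such that for all distinct $x,y\in V$, $xy\in E$ if and only if $x$ and $y$ alternate in $w$. For an integer $m$ and a set $R$ of positive integers each at most $m/2$, the circulant graph $C_m(R)$ has vertex set $\{0,1,\dots,m-1\}$, with $i$ and $j$ adjacent iff $\min(|i-j|,\,m-|i-j|)\in R$. $C_{2n}(x,1,n)$ denotes the circulant graph on $2n$ vertices with jump set $\{1,x,n\}$; it is $5$-regular exactly when $1<x<n$. *)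

theory Defs
  imports Main
begin

definition alternate :: "'a list \<Rightarrow> 'a \<Rightarrow> 'a \<Rightarrow> bool" where
  "alternate w x y \<longleftrightarrow>
     (let u = filter (\<lambda>z. z = x \<or> z = y) w in
        \<forall>i. Suc i < length u \<longrightarrow> u ! i \<noteq> u ! Suc i)"

definition word_representable :: "'a set \<Rightarrow> ('a \<Rightarrow> 'a \<Rightarrow> bool) \<Rightarrow> bool" where
  "word_representable V E \<longleftrightarrow>
     (\<exists>w. set w = V \<and>
          (\<forall>x\<in>V. \<forall>y\<in>V. x \<noteq> y \<longrightarrow> (E x y \<longleftrightarrow> alternate w x y)))"

definition circ_vertices :: "nat \<Rightarrow> nat set" where
  "circ_vertices m = {0..<m}"

definition circ_adj :: "nat \<Rightarrow> nat set \<Rightarrow> nat \<Rightarrow> nat \<Rightarrow> bool" where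
  "circ_adj m R i j \<longleftrightarrow>
     (let d = nat \<bar>int i - int j\<bar> in min d (m - d) \<in> R)"

end

theory Submission
  imports Defs
begin

fun norep :: "'a list \<Rightarrow> bool" where
  "norep (a # b # xs) = (a \<noteq> b \<and> norep (b # xs))"
| "norep _ = True"

lemma norep_iff: "norep l \<longleftrightarrow> (\<forall>i. Suc i < length l \<longrightarrow> l ! i \<noteq> l ! Suc i)"
proof (induction l rule: norep.induct)
  case (1 a b xs)
  show ?case
  proof
    assume H: "norep (a # b # xs)"
    show "\<forall>i. Suc i < length (a # b # xs) \<longrightarrow> (a # b # xs) ! i \<noteq> (a # b # xs) ! Suc i"
    proof (intro allI impI)
      fix i assume "Suc i < length (a # b # xs)"
      then show "(a # b # xs) ! i \<noteq> (a # b # xs) ! Suc i"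
        using H 1 by (cases i) auto
    qed
  next
    assume H: "\<forall>i. Suc i < length (a # b # xs) \<longrightarrow> (a # b # xs) ! i \<noteq> (a # b # xs) ! Suc i"
    have "a \<noteq> b" using H[rule_format, of 0] by simp
    moreover have "norep (b # xs)" unfolding 1
    proof (intro allI impI)
      fix i assume "Suc i < length (b # xs)"
      then show "(b # xs) ! i \<noteq> (b # xs) ! Suc i" using H[rule_format, of "Suc i"] by simp
    qed
    ultimately show "norep (a # b # xs)" by simp
  qed
qed auto

lemma alternate_iff: "alternate w x y \<longleftrightarrow> norep (filter (\<lambda>z. z = x \<or> z = y) w)"
  unfolding alternate_def Let_def norep_iff by simp

lemma norep_appendD1: "norep (xs @ ys) \<Longrightarrow> norep xs"
  by (induction xs rule: norep.induct) auto

lemma norep_appendD2: "norep (xs @ ys) \<Longrightarrow> norep ys"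
proof (induction xs)
  case (Cons a xs)
  then show ?case by (cases xs) (auto, metis norep.simps list.exhaust)
qed simp

lemma norep_rep: "\<forall>l\<in>set L. l = [p,q,p,q] \<Longrightarrow> p \<noteq> q \<Longrightarrow> norep (p # q # concat L)"
  by (induction L) auto

lemma norep_concat: "\<forall>l\<in>set L. l = [p,q,p,q] \<Longrightarrow> p \<noteq> q \<Longrightarrow> norep (concat L)"
  using norep_rep[of L p q] norep_appendD2[of "[p,q]"] by simp

lemma filter_upt2:
  assumes "u < v"
  shows "filter (\<lambda>z. z = u \<or> z = v) (filter P [0..<m]) =
     (if u < m \<and> P u then [u] else []) @ (if v < m \<and> P v then [v] else [])"
  using assms by (induction m) auto


definition seg :: "nat \<Rightarrow> (nat \<Rightarrow> bool) \<Rightarrow> nat list" where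
  "seg m P = filter P [0..<m]"

definition SS :: "nat \<Rightarrow> (nat \<Rightarrow> nat) \<Rightarrow> nat \<Rightarrow> nat \<Rightarrow> nat \<Rightarrow> nat list" where
  "SS m c k x y = seg m (\<lambda>z. c z = k \<and> z \<noteq> x \<and> z \<noteq> y)"

definition blk :: "nat \<Rightarrow> (nat \<Rightarrow> nat) \<Rightarrow> nat \<Rightarrow> nat \<Rightarrow> nat list" where
  "blk m c x y =
    (if c y = 2 \<and> c x = 0 then
       SS m c 0 x y @ [x] @ SS m c 1 x y @ SS m c 2 x y @ [x, y] @ SS m c 0 x y @ SS m c 1 x y @ SS m c 2 x y @ [y]
     else if c y = 2 then
       SS m c 0 x y @ SS m c 1 x y @ [x, y] @ SS m c 2 x y @ SS m c 0 x y @ SS m c 1 x y @ [y, x] @ SS m c 2 x y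
     else
       SS m c 0 x y @ [x, y] @ SS m c 1 x y @ SS m c 2 x y @ SS m c 0 x y @ [y, x] @ SS m c 1 x y @ SS m c 2 x y)"

definition base :: "nat \<Rightarrow> (nat \<Rightarrow> nat) \<Rightarrow> nat list" where
  "base m c = seg m (\<lambda>z. c z = 0) @ seg m (\<lambda>z. c z = 1) @ seg m (\<lambda>z. c z = 2) @
     rev (seg m (\<lambda>z. c z = 0)) @ rev (seg m (\<lambda>z. c z = 1)) @ rev (seg m (\<lambda>z. c z = 2))"

lemma proj_seg: "u < v \<Longrightarrow> filter (\<lambda>z. z = u \<or> z = v) (seg m P) =
     (if u < m \<and> P u then [u] else []) @ (if v < m \<and> P v then [v] else [])"
  unfolding seg_def by (rule filter_upt2)

lemma proj_rev: "filter Q (rev l) = rev (filter Q l)"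
  by (simp add: rev_filter)

lemma filter_if: "filter P (if b then xs else ys) = (if b then filter P xs else filter P ys)"
  by simp

lemma blk_edge:
  assumes "u < v" "v < m" "E u v" "\<not> E x y" "\<And>a b. E a b \<Longrightarrow> E b a"
    "c u \<noteq> c v" "c x < c y" "c u < 3" "c v < 3" "c y < 3"
  shows "filter (\<lambda>z. z = u \<or> z = v) (blk m c x y) = (if c u < c v then [u,v,u,v] else [v,u,v,u])"
proof -
  have ne: "\<not> (x = u \<and> y = v)" "\<not> (x = v \<and> y = u)" using assms(3,4,5) by blast+
  have um: "u < m" using assms(1,2) by simp
  show ?thesis
    unfolding blk_def SS_def filter_if filter_append proj_seg[OF assms(1)] filter.simps
    using ne assms(6-10) um assms(2)
    by auto
qed

lemma base_edge:
  assumes "u < v" "v < m" "c u \<noteq> c v" "c u < 3" "c v < 3"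
  shows "filter (\<lambda>z. z = u \<or> z = v) (base m c) = (if c u < c v then [u,v,u,v] else [v,u,v,u])"
  using assms unfolding base_def filter_append proj_rev proj_seg[OF assms(1)]
  by auto

lemma base_same:
  assumes "u < v" "v < m" "c u = c v" "c u < 3"
  shows "\<not> norep (filter (\<lambda>z. z = u \<or> z = v) (base m c))"
proof -
  have "norep (filter (\<lambda>z. z = u \<or> z = v) (base m c)) \<Longrightarrow> False"
    using assms unfolding base_def filter_append proj_rev proj_seg[OF assms(1)]
    by (cases "c v = 0"; cases "c v = 1"; cases "c v = 2"; simp)
  then show ?thesis by blast
qed

lemma proj_SS_self: "filter (\<lambda>z. z = x \<or> z = y) (SS m c k x y) = []"
  by (auto simp: SS_def seg_def filter_empty_conv)

lemma blk_self:
  assumes "x \<noteq> y" "c x < c y" "c y < 3"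
  shows "\<not> norep (filter (\<lambda>z. z = x \<or> z = y) (blk m c x y))"
proof -
  have "norep (filter (\<lambda>z. z = x \<or> z = y) (blk m c x y)) \<Longrightarrow> False"
    using assms unfolding blk_def
    by (auto split: if_splits simp: proj_SS_self)
  then show ?thesis by blast
qed

definition NE :: "nat \<Rightarrow> (nat \<Rightarrow> nat \<Rightarrow> bool) \<Rightarrow> (nat \<Rightarrow> nat) \<Rightarrow> (nat \<times> nat) list" where
  "NE m E c = [(x, y). x \<leftarrow> [0..<m], y \<leftarrow> [0..<m], x \<noteq> y \<and> \<not> E x y \<and> c x < c y]"

definition WW :: "nat \<Rightarrow> (nat \<Rightarrow> nat \<Rightarrow> bool) \<Rightarrow> (nat \<Rightarrow> nat) \<Rightarrow> nat list" where
  "WW m E c = base m c @ concat (map (\<lambda>(x, y). blk m c x y) (NE m E c))"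

lemma set_NE: "set (NE m E c) = {(x, y). x < m \<and> y < m \<and> x \<noteq> y \<and> \<not> E x y \<and> c x < c y}"
  unfolding NE_def by auto

lemma alternate_sym: "alternate w x y = alternate w y x"
  unfolding alternate_iff by (metis (no_types, lifting) disj_commute filter_cong)

lemma proj_WW: "filter Q (WW m E c) = filter Q (base m c) @ concat (map (\<lambda>(x, y). filter Q (blk m c x y)) (NE m E c))"
  unfolding WW_def filter_append filter_concat map_map
  by (simp add: case_prod_unfold comp_def)

lemma alt_lt:
  assumes sym: "\<And>a b. E a b \<Longrightarrow> E b a" and col: "\<And>v. c v < 3"
    and prp: "\<And>a b. a < m \<Longrightarrow> b < m \<Longrightarrow> a \<noteq> b \<Longrightarrow> E a b \<Longrightarrow> c a \<noteq> c b"
    and uv: "u < v" "v < m"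
  shows "E u v \<longleftrightarrow> alternate (WW m E c) u v"
proof
  assume e: "E u v"
  have cuv: "c u \<noteq> c v" using prp[of u v] uv e by simp
  define p where "p = (if c u < c v then u else v)"
  define q where "q = (if c u < c v then v else u)"
  have pq: "(if c u < c v then [u,v,u,v] else [v,u,v,u]) = [p,q,p,q]" "p \<noteq> q"
    unfolding p_def q_def using uv by auto
  let ?Q = "\<lambda>z. z = u \<or> z = v"
  have "\<forall>l\<in>set (filter ?Q (base m c) # map (\<lambda>(x, y). filter ?Q (blk m c x y)) (NE m E c)). l = [p,q,p,q]"
  proof
    fix l assume "l \<in> set (filter ?Q (base m c) # map (\<lambda>(x, y). filter ?Q (blk m c x y)) (NE m E c))"
    then consider "l = filter ?Q (base m c)" | x y where "(x, y) \<in> set (NE m E c)" "l = filter ?Q (blk m c x y)"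
      by auto
    then show "l = [p,q,p,q]"
    proof cases
      case 1 then show ?thesis using base_edge[OF uv cuv col[of u] col[of v]] pq by simp
    next
      case 2
      then have h: "\<not> E x y" "c x < c y" using set_NE by auto
      show ?thesis using 2 blk_edge[OF uv e h(1) sym cuv h(2) col[of u] col[of v] col[of y]] pq by simp
    qed
  qed
  then have "norep (concat (filter ?Q (base m c) # map (\<lambda>(x, y). filter ?Q (blk m c x y)) (NE m E c)))"
    by (rule norep_concat[OF _ pq(2)])
  then show "alternate (WW m E c) u v" unfolding alternate_iff proj_WW by simp
next
  assume a: "alternate (WW m E c) u v"
  let ?Q = "\<lambda>z. z = u \<or> z = v"
  have n: "norep (filter ?Q (base m c) @ concat (map (\<lambda>(x, y). filter ?Q (blk m c x y)) (NE m E c)))"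
    using a unfolding alternate_iff proj_WW .
  show "E u v"
  proof (rule ccontr)
    assume ne: "\<not> E u v"
    show False
    proof (cases "c u = c v")
      case True
      then show False using base_same[OF uv True col[of u]] norep_appendD1[OF n] by simp
    next
      case False
      define x where "x = (if c u < c v then u else v)"
      define y where "y = (if c u < c v then v else u)"
      have Qxy: "?Q = (\<lambda>z. z = x \<or> z = y)" unfolding x_def y_def by auto
      have xy: "x \<noteq> y" "c x < c y" "\<not> E x y" "x < m" "y < m"
        using False ne uv sym unfolding x_def y_def by auto
      then have "(x, y) \<in> set (NE m E c)" using set_NE by auto
      then obtain as bs where NEs: "NE m E c = as @ (x, y) # bs" by (meson split_list)
      have "norep (filter ?Q (blk m c x y) @ concat (map (\<lambda>(x, y). filter ?Q (blk m c x y)) bs))"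
        using norep_appendD2[OF n] unfolding NEs by (simp add: norep_appendD2)
      then have "norep (filter ?Q (blk m c x y))" by (rule norep_appendD1)
      then show False using blk_self[OF xy(1,2) col[of y]] unfolding Qxy by simp
    qed
  qed
qed

lemma set_blk: "set (blk m c x y) \<subseteq> {0..<m} \<union> {x, y}"
  by (auto simp: blk_def SS_def seg_def)

lemma three_col:
  fixes m :: nat and c :: "nat \<Rightarrow> nat"
  assumes sym: "\<And>a b. E a b \<Longrightarrow> E b a" and col: "\<And>v. c v < 3"
    and prp: "\<And>a b. a < m \<Longrightarrow> b < m \<Longrightarrow> a \<noteq> b \<Longrightarrow> E a b \<Longrightarrow> c a \<noteq> c b"
  shows "word_representable {0..<m} E"
  unfolding word_representable_def
proof (intro exI conjI ballI impI)
  show "set (WW m E c) = {0..<m}"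
  proof
    have b: "set (base m c) \<subseteq> {0..<m}" by (auto simp: base_def seg_def)
    have "\<forall>p\<in>set (NE m E c). set (case p of (x, y) \<Rightarrow> blk m c x y) \<subseteq> {0..<m}"
    proof
      fix p assume "p \<in> set (NE m E c)"
      then obtain x y where "p = (x, y)" "x < m" "y < m" using set_NE by auto
      then show "set (case p of (x, y) \<Rightarrow> blk m c x y) \<subseteq> {0..<m}"
        using set_blk[of m c x y] by auto
    qed
    then show "set (WW m E c) \<subseteq> {0..<m}" unfolding WW_def using b by auto
    show "{0..<m} \<subseteq> set (WW m E c)"
    proof
      fix v assume "v \<in> {0..<m}"
      moreover have "c v = 0 \<or> c v = 1 \<or> c v = 2" using col[of v] by auto
      ultimately show "v \<in> set (WW m E c)" unfolding WW_def base_def seg_def by auto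
    qed
  qed
next
  fix u v assume uv: "u \<in> {0..<m}" "v \<in> {0..<m}" "u \<noteq> v"
  show "E u v \<longleftrightarrow> alternate (WW m E c) u v"
  proof (cases "u < v")
    case True then show ?thesis using alt_lt[where E=E and c=c and m=m, OF sym col prp True] uv by auto
  next
    case False
    then have "v < u" using uv by simp
    have h: "E v u \<longleftrightarrow> alternate (WW m E c) v u"
      using alt_lt[where E=E and c=c and m=m, OF sym col prp \<open>v < u\<close>] uv by auto
    moreover have "E u v \<longleftrightarrow> E v u" using sym by blast
    ultimately show ?thesis using alternate_sym[of "WW m E c" u v] by simp
  qed
qed

lemma X: "r < 3 \<Longrightarrow> gi \<le> 2 \<Longrightarrow> gj \<le> 2 \<Longrightarrow> k \<le> 1 \<Longrightarrow> (k + gj + 3 - gi) mod 3 \<noteq> 0 \<Longrightarrow>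
   (r + gi) mod 3 \<noteq> (r + k + gj) mod 3" for r gi gj k :: nat
  apply (subgoal_tac "r \<in> {0,1,2} \<and> gi \<in> {0,1,2} \<and> gj \<in> {0,1,2} \<and> k \<in> {0,1}")
   apply (elim conjE; simp only: insert_iff empty_iff; elim disjE; simp)
  by auto

lemma modkey: "gi \<le> 2 \<Longrightarrow> gj \<le> 2 \<Longrightarrow> k \<le> 1 \<Longrightarrow> (k + gj + 3 - gi) mod 3 \<noteq> 0 \<Longrightarrow>
   (i + gi) mod 3 \<noteq> (i + k + gj) mod 3" for i gi gj k :: nat
proof -
  assume a: "gi \<le> 2" "gj \<le> 2" "k \<le> 1" "(k + gj + 3 - gi) mod 3 \<noteq> 0"
  have "(i + gi) mod 3 = (i mod 3 + gi) mod 3" "(i + k + gj) mod 3 = (i mod 3 + k + gj) mod 3"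
    by (simp add: mod_add_left_eq) (metis add.assoc mod_add_left_eq)
  then show ?thesis using X[OF _ a, of "i mod 3"] by simp
qed

definition gg :: "nat \<Rightarrow> nat \<Rightarrow> nat" where
  "gg L i = (if i < L then 0 else if i < 2 * L then 1 else 2)"

definition col :: "nat \<Rightarrow> nat \<Rightarrow> nat" where
  "col L i = (i + gg L i) mod 3"

lemma gg_cases: "gg L i = 0 \<and> i < L \<or> gg L i = 1 \<and> L \<le> i \<and> i < 2 * L \<or> gg L i = 2 \<and> 2 * L \<le> i"
  unfolding gg_def by auto

lemma col_fwd:
  fixes t s i j e :: nat
  assumes "i < 6 * t" "j < 6 * t" and e: "j = i + e \<or> i + e = j + 6 * t" and
    ee: "e = 1 \<or> e = 3 * s + 1 \<or> e = 3 * t" "3 * s + 1 \<le> 2 * t"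
  shows "col (2*t) i \<noteq> col (2*t) j"
proof -
  define k where "k = (if e = 3 * t then 0 else 1::nat)"
  have k: "k \<le> 1" unfolding k_def by auto
  have emod: "(i + e) mod 3 = (i + k) mod 3"
  proof -
    have "e mod 3 = k" using ee(1) unfolding k_def by auto
    then show ?thesis by (metis mod_add_right_eq)
  qed
  have jmod: "(j + gg (2*t) j) mod 3 = (i + k + gg (2*t) j) mod 3"
    using e
  proof
    assume "j = i + e" then show ?thesis using emod by (metis mod_add_left_eq)
  next
    assume h: "i + e = j + 6 * t"
    have "(j + 6 * t + gg (2*t) j) = (j + gg (2*t) j) + 3 * (2 * t)" by simp
    then have "(j + gg (2*t) j) mod 3 = (j + 6 * t + gg (2*t) j) mod 3" by (metis mod_mult_self2)
    also have "\<dots> = (i + e + gg (2*t) j) mod 3" using h by simp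
    also have "\<dots> = (i + k + gg (2*t) j) mod 3" using emod by (metis mod_add_left_eq)
    finally show ?thesis .
  qed
  have g2: "gg (2*t) i \<le> 2" "gg (2*t) j \<le> 2" unfolding gg_def by auto
  have "(k + gg (2*t) j + 3 - gg (2*t) i) mod 3 \<noteq> 0"
    using gg_cases[of "2*t" i] gg_cases[of "2*t" j] e ee assms(1,2) unfolding k_def
    by (elim disjE conjE; simp split: if_splits; linarith?)
  then show ?thesis unfolding col_def jmod using modkey[OF g2(1) g2(2) k] by simp
qed

lemma circ_sym: "circ_adj m R a b \<Longrightarrow> circ_adj m R b a"
  unfolding circ_adj_def Let_def by (simp add: abs_minus_commute)

lemma col_prop_lt:
  fixes t s a b :: nat
  assumes "a < b" "b < 6 * t" "3 * s + 1 \<le> 2 * t" "circ_adj (6 * t) {1, 3 * s + 1, 3 * t} a b"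
  shows "col (2*t) a \<noteq> col (2*t) b"
proof -
  have d: "nat \<bar>int a - int b\<bar> = b - a" using assms(1) by simp
  define e where "e = min (b - a) (6 * t - (b - a))"
  have e3: "e = 1 \<or> e = 3 * s + 1 \<or> e = 3 * t" using assms(4) unfolding circ_adj_def Let_def d e_def by auto
  show ?thesis
  proof (cases "b - a \<le> 6 * t - (b - a)")
    case True
    then have "b = a + e" unfolding e_def using assms(1) by simp
    then show ?thesis using col_fwd[of a t b e s] assms e3 by simp
  next
    case False
    then have "b + e = a + 6 * t" unfolding e_def using assms(1,2) by simp
    then show ?thesis using col_fwd[of b t a e s] assms e3 by simp
  qed
qed

theorem corollary4:
  fixes n x :: nat
  assumes "1 < x" and "x < n"
    and "n mod 3 = 0" and "x mod 3 = 1" and "3 * x \<le> 2 * n"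
  shows "word_representable (circ_vertices (2 * n)) (circ_adj (2 * n) {1, x, n})"
proof -
  obtain t where t: "n = 3 * t" using assms(3) by auto
  obtain s where s: "x = 3 * s + 1" using assms(4) by (metis mod_div_mult_eq add.commute mult.commute)
  have st: "3 * s + 1 \<le> 2 * t" using assms(5) unfolding t s by simp
  have m: "2 * n = 6 * t" unfolding t by simp
  have "word_representable {0..<6 * t} (circ_adj (6 * t) {1, 3 * s + 1, 3 * t})"
  proof (rule three_col[where c = "col (2 * t)"])
    show "\<And>a b. circ_adj (6 * t) {1, 3 * s + 1, 3 * t} a b \<Longrightarrow> circ_adj (6 * t) {1, 3 * s + 1, 3 * t} b a"
      by (rule circ_sym)
    show "\<And>v. col (2 * t) v < 3" unfolding col_def by simp
    fix a b assume ab: "a < 6 * t" "b < 6 * t" "a \<noteq> b" "circ_adj (6 * t) {1, 3 * s + 1, 3 * t} a b"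
    show "col (2 * t) a \<noteq> col (2 * t) b"
    proof (cases "a < b")
      case True then show ?thesis using col_prop_lt[OF True ab(2) st ab(4)] by simp
    next
      case False
      then have "b < a" using ab(3) by simp
      then show ?thesis using col_prop_lt[OF \<open>b < a\<close> ab(1) st circ_sym[OF ab(4)]] by simp
    qed
  qed
  then show ?thesis unfolding circ_vertices_def m t s by simp
qed

end
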